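(* In the risk-aversion-shock setting, suppose $\mathbb P_{(z,\hat z)}(\hat\beta\hat R>0)>0$ for all $z,\hat z\in\mathsf Z$. If there exists $z_{ij}\in\mathsf Z$ such that $\lim_{w\to\infty}c^*(w,z_{ij})/w>0$, then $\bar p_{i1}=\cdots=\bar p_{i,i-1}=0$. In particular, if for every $i>1$ there exists $j$ with $\lim_{w\to\infty}c^*(w,z_{ij})/w>0$, then $\bar P$ is upper triangular.
   Context: Risk-aversion-shock setting. $\mathsf Z=\bar{\mathsf Z}\times\tilde{\mathsf Z}$ with $\bar{\mathsf Z}=\{\bar z_1,\dots,\bar z_N\}$, $\tilde{\mathsf Z}=\{\tilde z_1,\dots,\tilde z_M\}$; $Z_t=(\bar Z_t,\tilde Z_t)$ where $\{\bar Z_t\}$, $\{\tilde Z_t\}$ are independent Markov chains with transition matrices $\bar P=(\bar p_{ij})$ and $\tilde P=(\tilde p_{jk})$, so $\{Z_t\}$ has transition matrix $P=\bar P\otimes\tilde P$. Write $z_{ij}=(\bar z_i,\tilde z_j)$. $\{\epsilon_t\}_{t\ge1}$ i.i.d. with distribution $\pi$, independent of $\{Z_t\}$; for nonnegative measurable $\beta,R,Y$, $\beta_t=\beta(Z_{t-1},Z_t,\epsilon_t)$, $R_t=R(Z_{t-1},Z_t,\epsilon_t)$, $Y_t=Y(Z_{t-1},Z_t,\epsilon_t)$, $\beta_0=1$. Utility: $u(c,z_{ij})=c^{1-\gamma_i}/(1-\gamma_i)$ if $\gamma_i\ne1$ and $\log c$ if $\gamma_i=1$, where $0<\gamma_1<\dots<\gamma_N$;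 $u'(c,z)$ is the derivative in $c$. $\mathbb E_z$: expectation given $Z_0=z$; under $\mathbb E_z$, $\hat Z=Z_1$, $\hat\beta=\beta(z,\hat Z,\epsilon_1)$, $\hat R=R(z,\hat Z,\epsilon_1)$, $\hat Y=Y(z,\hat Z,\epsilon_1)$. $\mathbb P_{(z,\hat z)}(\hat\beta\hat R>0):=\pi\{\epsilon:\beta(z,\hat z,\epsilon)R(z,\hat z,\epsilon)>0\}$. Assumption 2 holds: (a) $\mathbb E_zu'(\hat Y,\hat Z)<\infty$ and $\mathbb E_z\hat\beta\hat Ru'(\hat Y,\hat Z)<\infty$ for all $z$; (b) $r(K(1))<1$ ($r$ = spectral radius), $K_{z\hat z}(\theta)=P(z,\hat z)\int\beta(z,\hat z,\epsilon)R(z,\hat z,\epsilon)^\theta\pi(d\epsilon)$. $S_0=(0,\infty)\times\mathsf Z$; $\mathcal C$: continuous $c:S_0\to\mathbb R_+$, increasing in $w$, $0<c(w,z)\le w$, $\sup_{S_0}|u'(c(w,z),z)-u'(w,z)|<\infty$. $T$: $Tc(w,z)$ is the unique $\xi\in(0,w]$ with $u'(\xi,z)=\max\{\mathbb E_z\hat\beta\hat Ru'(c(\hat R(w-\xi)+\hat Y,\hat Z),\hat Z),u'(w,z)\}$. $c^*$ is the unique fixed point of $T$ in $\mathcal C$ (optimal consumption function). *)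

theory Defs
  imports "HOL-Probability.Probability" "Jordan_Normal_Form.Spectral_Radius"
begin

(* States: z = (i,j) with i < N (index of \<bar>z_i, 0-based) and j < M (index of \<tilde>z_j).
   \<bar>P and \<tilde>P are given as functions nat \<Rightarrow> nat \<Rightarrow> real. *)

definition Zset :: "nat \<Rightarrow> nat \<Rightarrow> (nat \<times> nat) set" where
  "Zset N M = {0..<N} \<times> {0..<M}"

definition stochastic :: "nat \<Rightarrow> (nat \<Rightarrow> nat \<Rightarrow> real) \<Rightarrow> bool" where
  "stochastic n Q \<longleftrightarrow> (\<forall>a<n. \<forall>b<n. Q a b \<ge> 0) \<and> (\<forall>a<n. (\<Sum>b<n. Q a b) = 1)"

definition Pjoint :: "(nat \<Rightarrow> nat \<Rightarrow> real) \<Rightarrow> (nat \<Rightarrow> nat \<Rightarrow> real) \<Rightarrow> nat \<times> nat \<Rightarrow> nat \<times> nat \<Rightarrow> real" where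
  "Pjoint Pb Pt z zh = Pb (fst z) (fst zh) * Pt (snd z) (snd zh)"

definition util :: "(nat \<Rightarrow> real) \<Rightarrow> real \<Rightarrow> nat \<times> nat \<Rightarrow> real" where
  "util \<gamma> c z = (if \<gamma> (fst z) = 1 then ln c else c powr (1 - \<gamma> (fst z)) / (1 - \<gamma> (fst z)))"

definition uprime :: "(nat \<Rightarrow> real) \<Rightarrow> real \<Rightarrow> nat \<times> nat \<Rightarrow> real" where
  "uprime \<gamma> c z = c powr (- \<gamma> (fst z))"

definition uprimeE :: "(nat \<Rightarrow> real) \<Rightarrow> real \<Rightarrow> nat \<times> nat \<Rightarrow> ennreal" where
  "uprimeE \<gamma> c z = (if c > 0 then ennreal (uprime \<gamma> c z) else \<infinity>)"

(* E_z f(\<hat>Z, \<epsilon>_1) for nonnegative f, with \<hat>Z ~ P(z,.) independent of \<epsilon>_1 ~ \<pi> *)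
definition Ez :: "nat \<Rightarrow> nat \<Rightarrow> (nat \<Rightarrow> nat \<Rightarrow> real) \<Rightarrow> (nat \<Rightarrow> nat \<Rightarrow> real) \<Rightarrow> 'e measure
    \<Rightarrow> nat \<times> nat \<Rightarrow> (nat \<times> nat \<Rightarrow> 'e \<Rightarrow> ennreal) \<Rightarrow> ennreal" where
  "Ez N M Pb Pt \<pi> z f = (\<Sum>zh\<in>Zset N M. ennreal (Pjoint Pb Pt z zh) * (\<integral>\<^sup>+ e. f zh e \<partial>\<pi>))"

definition Kentry :: "(nat \<Rightarrow> nat \<Rightarrow> real) \<Rightarrow> (nat \<Rightarrow> nat \<Rightarrow> real) \<Rightarrow> 'e measure
    \<Rightarrow> (nat \<times> nat \<Rightarrow> nat \<times> nat \<Rightarrow> 'e \<Rightarrow> real) \<Rightarrow> (nat \<times> nat \<Rightarrow> nat \<times> nat \<Rightarrow> 'e \<Rightarrow> real)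
    \<Rightarrow> nat \<times> nat \<Rightarrow> nat \<times> nat \<Rightarrow> ennreal" where
  "Kentry Pb Pt \<pi> \<beta> R z zh = ennreal (Pjoint Pb Pt z zh) * (\<integral>\<^sup>+ e. ennreal (\<beta> z zh e * R z zh e) \<partial>\<pi>)"

(* K(1) as an (N*M) x (N*M) complex matrix, state (i,j) encoded as index i*M + j *)
definition Kmat :: "nat \<Rightarrow> nat \<Rightarrow> (nat \<Rightarrow> nat \<Rightarrow> real) \<Rightarrow> (nat \<Rightarrow> nat \<Rightarrow> real) \<Rightarrow> 'e measure
    \<Rightarrow> (nat \<times> nat \<Rightarrow> nat \<times> nat \<Rightarrow> 'e \<Rightarrow> real) \<Rightarrow> (nat \<times> nat \<Rightarrow> nat \<times> nat \<Rightarrow> 'e \<Rightarrow> real) \<Rightarrow> complex mat" where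
  "Kmat N M Pb Pt \<pi> \<beta> R = mat (N * M) (N * M)
     (\<lambda>(a, b). complex_of_real (enn2real (Kentry Pb Pt \<pi> \<beta> R (a div M, a mod M) (b div M, b mod M))))"

definition candC :: "nat \<Rightarrow> nat \<Rightarrow> (nat \<Rightarrow> real) \<Rightarrow> (real \<Rightarrow> nat \<times> nat \<Rightarrow> real) set" where
  "candC N M \<gamma> = {c.
      continuous_on ({0<..} \<times> Zset N M) (\<lambda>p. c (fst p) (snd p)) \<and>
      (\<forall>z\<in>Zset N M. mono_on {0<..} (\<lambda>w. c w z)) \<and>
      (\<forall>w>0. \<forall>z\<in>Zset N M. 0 < c w z \<and> c w z \<le> w) \<and>
      (\<exists>B. \<forall>w>0. \<forall>z\<in>Zset N M. \<bar>uprime \<gamma> (c w z) z - uprime \<gamma> w z\<bar> \<le> B)}"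

definition Top :: "nat \<Rightarrow> nat \<Rightarrow> (nat \<Rightarrow> nat \<Rightarrow> real) \<Rightarrow> (nat \<Rightarrow> nat \<Rightarrow> real) \<Rightarrow> 'e measure
    \<Rightarrow> (nat \<Rightarrow> real)
    \<Rightarrow> (nat \<times> nat \<Rightarrow> nat \<times> nat \<Rightarrow> 'e \<Rightarrow> real) \<Rightarrow> (nat \<times> nat \<Rightarrow> nat \<times> nat \<Rightarrow> 'e \<Rightarrow> real)
    \<Rightarrow> (nat \<times> nat \<Rightarrow> nat \<times> nat \<Rightarrow> 'e \<Rightarrow> real)
    \<Rightarrow> (real \<Rightarrow> nat \<times> nat \<Rightarrow> real) \<Rightarrow> real \<Rightarrow> nat \<times> nat \<Rightarrow> real" where
  "Top N M Pb Pt \<pi> \<gamma> \<beta> R Y c w z = (THE \<xi>. 0 < \<xi> \<and> \<xi> \<le> w \<and>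
      uprimeE \<gamma> \<xi> z = max
        (Ez N M Pb Pt \<pi> z (\<lambda>zh e. ennreal (\<beta> z zh e * R z zh e) *
             uprimeE \<gamma> (c (R z zh e * (w - \<xi>) + Y z zh e) zh) zh))
        (uprimeE \<gamma> w z))"

end

theory Submission
  imports Defs
begin


locale RA =
  fixes N M :: nat
    and Pb Pt :: "nat \<Rightarrow> nat \<Rightarrow> real"
    and \<gamma> :: "nat \<Rightarrow> real"
    and \<pi> :: "'e measure"
    and \<beta> R Y :: "nat \<times> nat \<Rightarrow> nat \<times> nat \<Rightarrow> 'e \<Rightarrow> real"
    and c :: "real \<Rightarrow> nat \<times> nat \<Rightarrow> real"
  assumes NM: "N \<ge> 1" "M \<ge> 1"
    and Pb: "stochastic N Pb" and Pt: "stochastic M Pt"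
    and gamma_pos: "0 < \<gamma> 0"
    and gamma_incr: "\<forall>i. i + 1 < N \<longrightarrow> \<gamma> i < \<gamma> (i + 1)"
    and pi: "prob_space \<pi>"
    and meas: "\<forall>z\<in>Zset N M. \<forall>zh\<in>Zset N M.
        \<beta> z zh \<in> borel_measurable \<pi> \<and> R z zh \<in> borel_measurable \<pi> \<and> Y z zh \<in> borel_measurable \<pi>"
    and nonneg: "\<forall>z zh e. 0 \<le> \<beta> z zh e \<and> 0 \<le> R z zh e \<and> 0 \<le> Y z zh e"
    and A2a2: "\<forall>z\<in>Zset N M. Ez N M Pb Pt \<pi> z
        (\<lambda>zh e. ennreal (\<beta> z zh e * R z zh e) * uprimeE \<gamma> (Y z zh e) zh) < \<infinity>"
    and K_fin: "\<forall>z\<in>Zset N M. \<forall>zh\<in>Zset N M. Kentry Pb Pt \<pi> \<beta> R z zh < \<infinity>"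
    and pos_prob: "\<forall>z\<in>Zset N M. \<forall>zh\<in>Zset N M.
        measure \<pi> {e \<in> space \<pi>. \<beta> z zh e * R z zh e > 0} > 0"
    and cstar_C: "c \<in> candC N M \<gamma>"
    and cstar_fix: "\<forall>w>0. \<forall>z\<in>Zset N M. Top N M Pb Pt \<pi> \<gamma> \<beta> R Y c w z = c w z"
begin

abbreviation "ZZ \<equiv> Zset N M"

lemma Zset_iff: "zh \<in> Zset N M \<longleftrightarrow> fst zh < N \<and> snd zh < M"
  by (cases zh) (auto simp: Zset_def)

lemma finite_Z: "finite (Zset N M)"
  by (simp add: Zset_def)

lemma gamma_pos_all: "k < N \<Longrightarrow> 0 < \<gamma> k"
proof (induction k)
  case 0 then show ?case using gamma_pos by simp
next
  case (Suc k) then show ?case using gamma_incr by (metis Suc_eq_plus1 Suc_lessD order.strict_trans)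
qed

lemma gamma_strict: "k < i \<Longrightarrow> i < N \<Longrightarrow> \<gamma> k < \<gamma> i"
proof (induction i)
  case 0 then show ?case by simp
next
  case (Suc i)
  have "\<gamma> i < \<gamma> (Suc i)" using gamma_incr Suc.prems by (metis Suc_eq_plus1)
  moreover have "k = i \<or> k < i" using Suc.prems by auto
  ultimately show ?case using Suc by force
qed

lemma gammaZ: "zh \<in> ZZ \<Longrightarrow> 0 < \<gamma> (fst zh)"
  using gamma_pos_all Zset_iff by blast

lemma c_props: "0 < x \<Longrightarrow> zh \<in> ZZ \<Longrightarrow> 0 < c x zh \<and> c x zh \<le> x"
  using cstar_C unfolding candC_def by auto

lemma c_mono: "0 < x \<Longrightarrow> x \<le> y \<Longrightarrow> zh \<in> ZZ \<Longrightarrow> c x zh \<le> c y zh"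
  using cstar_C unfolding candC_def mono_on_def by auto

lemma c_cont: "zh \<in> ZZ \<Longrightarrow> continuous_on {0<..} (\<lambda>x. c x zh)"
proof -
  assume zh: "zh \<in> ZZ"
  have "continuous_on ({0<..} \<times> ZZ) (\<lambda>p. c (fst p) (snd p))"
    using cstar_C unfolding candC_def by auto
  moreover have "continuous_on {0<..} (\<lambda>x::real. (x, zh))"
    by (intro continuous_intros)
  moreover have "(\<lambda>x::real. (x, zh)) ` {0<..} \<subseteq> {0<..} \<times> ZZ" using zh by auto
  ultimately have "continuous_on {0<..} ((\<lambda>p. c (fst p) (snd p)) \<circ> (\<lambda>x::real. (x, zh)))"
    using continuous_on_compose continuous_on_subset by blast
  then show ?thesis by (simp add: o_def)
qed

lemma B_ex: "\<exists>B\<ge>0. \<forall>x>0. \<forall>zh\<in>ZZ. uprime \<gamma> (c x zh) zh \<le> uprime \<gamma> x zh + B"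
proof -
  obtain B where B: "\<forall>w>0. \<forall>z\<in>ZZ. \<bar>uprime \<gamma> (c w z) z - uprime \<gamma> w z\<bar> \<le> B"
    using cstar_C unfolding candC_def by auto
  have "B \<ge> 0" using B[rule_format, of 1 "(0,0)"] NM by (auto simp: Zset_def)
  moreover have "\<forall>x>0. \<forall>zh\<in>ZZ. uprime \<gamma> (c x zh) zh \<le> uprime \<gamma> x zh + B"
    using B by (smt (verit))
  ultimately show ?thesis by blast
qed

definition Bc where "Bc = (SOME B. B \<ge> 0 \<and> (\<forall>x>0. \<forall>zh\<in>ZZ. uprime \<gamma> (c x zh) zh \<le> uprime \<gamma> x zh + B))"

lemma Bc: "Bc \<ge> 0" "0 < x \<Longrightarrow> zh \<in> ZZ \<Longrightarrow> uprime \<gamma> (c x zh) zh \<le> uprime \<gamma> x zh + Bc"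
proof -
  have "Bc \<ge> 0 \<and> (\<forall>x>0. \<forall>zh\<in>ZZ. uprime \<gamma> (c x zh) zh \<le> uprime \<gamma> x zh + Bc)"
    unfolding Bc_def using B_ex by (rule someI_ex)
  then show "Bc \<ge> 0" "0 < x \<Longrightarrow> zh \<in> ZZ \<Longrightarrow> uprime \<gamma> (c x zh) zh \<le> uprime \<gamma> x zh + Bc" by auto
qed

lemma uprime_anti: "zh \<in> ZZ \<Longrightarrow> 0 < x \<Longrightarrow> x \<le> y \<Longrightarrow> uprime \<gamma> y zh \<le> uprime \<gamma> x zh"
  unfolding uprime_def using gammaZ[of zh] by (intro powr_mono2') auto

lemma uprime_strict: "zh \<in> ZZ \<Longrightarrow> 0 < x \<Longrightarrow> x < y \<Longrightarrow> uprime \<gamma> y zh < uprime \<gamma> x zh"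
  unfolding uprime_def using gammaZ[of zh] by (intro powr_less_mono2_neg) auto

lemma uprime_nonneg: "0 \<le> uprime \<gamma> x zh"
  unfolding uprime_def by simp

lemma measZ: "z \<in> ZZ \<Longrightarrow> zh \<in> ZZ \<Longrightarrow>
   \<beta> z zh \<in> borel_measurable \<pi> \<and> R z zh \<in> borel_measurable \<pi> \<and> Y z zh \<in> borel_measurable \<pi>"
  using meas by blast

definition G where "G z w \<xi> zh e = ennreal (\<beta> z zh e * R z zh e) *
             uprimeE \<gamma> (c (R z zh e * (w - \<xi>) + Y z zh e) zh) zh"

definition F where "F z w \<xi> = Ez N M Pb Pt \<pi> z (G z w \<xi>)"

definition Hd where "Hd z zh e = ennreal (\<beta> z zh e * R z zh e) * uprimeE \<gamma> (Y z zh e) zh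
   + ennreal (\<beta> z zh e * R z zh e) * ennreal Bc"

lemma Top_eq: "Top N M Pb Pt \<pi> \<gamma> \<beta> R Y c w z =
   (THE \<xi>. 0 < \<xi> \<and> \<xi> \<le> w \<and> uprimeE \<gamma> \<xi> z = max (F z w \<xi>) (uprimeE \<gamma> w z))"
  unfolding Top_def F_def G_def by simp

lemma meas_uY: "z \<in> ZZ \<Longrightarrow> zh \<in> ZZ \<Longrightarrow>
   (\<lambda>e. ennreal (\<beta> z zh e * R z zh e) * uprimeE \<gamma> (Y z zh e) zh) \<in> borel_measurable \<pi>"
proof -
  assume z: "z \<in> ZZ" and zh: "zh \<in> ZZ"
  note mz[measurable] = measZ[OF z zh, THEN conjunct1] measZ[OF z zh, THEN conjunct2, THEN conjunct1]
     measZ[OF z zh, THEN conjunct2, THEN conjunct2]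
  show ?thesis unfolding uprimeE_def uprime_def by measurable
qed

lemma meas_G: "z \<in> ZZ \<Longrightarrow> zh \<in> ZZ \<Longrightarrow> \<xi> \<le> w \<Longrightarrow> G z w \<xi> zh \<in> borel_measurable \<pi>"
proof -
  assume z: "z \<in> ZZ" and zh: "zh \<in> ZZ" and xw: "\<xi> \<le> w"
  define g' where "g' = (\<lambda>x::real. if x \<in> {0<..} then c x zh else 0)"
  have gm[measurable]: "g' \<in> borel_measurable borel"
    unfolding g'_def
    by (rule borel_measurable_continuous_on_if) (auto intro: c_cont[OF zh] continuous_intros)
  note mz[measurable] = measZ[OF z zh, THEN conjunct1] measZ[OF z zh, THEN conjunct2, THEN conjunct1]
     measZ[OF z zh, THEN conjunct2, THEN conjunct2]
  define X where "X = (\<lambda>e. R z zh e * (w - \<xi>) + Y z zh e)"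
  have Xm[measurable]: "X \<in> borel_measurable \<pi>" unfolding X_def by measurable
  have "(\<lambda>e. if 0 < X e then ennreal (\<beta> z zh e * R z zh e) * uprimeE \<gamma> (g' (X e)) zh
          else ennreal (\<beta> z zh e * R z zh e) * uprimeE \<gamma> (c 0 zh) zh) \<in> borel_measurable \<pi>"
    unfolding uprimeE_def uprime_def by measurable
  moreover have "G z w \<xi> zh = (\<lambda>e. if 0 < X e then ennreal (\<beta> z zh e * R z zh e) * uprimeE \<gamma> (g' (X e)) zh
          else ennreal (\<beta> z zh e * R z zh e) * uprimeE \<gamma> (c 0 zh) zh)"
  proof (rule ext)
    fix e
    have "0 \<le> X e" unfolding X_def using nonneg[rule_format, of z zh e] xw by simp
    then show "G z w \<xi> zh e = (if 0 < X e then ennreal (\<beta> z zh e * R z zh e) * uprimeE \<gamma> (g' (X e)) zh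
          else ennreal (\<beta> z zh e * R z zh e) * uprimeE \<gamma> (c 0 zh) zh)"
      unfolding G_def X_def g'_def by auto
  qed
  ultimately show ?thesis by simp
qed

end


lemma ennreal_max_eq: "ennreal (max a b) = max (ennreal a) (ennreal b)"
  by (cases "a \<le> b") (auto simp: max_def ennreal_leI intro: antisym)

context RA begin

lemma nn_all: "0 \<le> \<beta> z zh e" "0 \<le> R z zh e" "0 \<le> Y z zh e"
  using nonneg by blast+

lemma term_le_Ez: "z \<in> ZZ \<Longrightarrow> zh \<in> ZZ \<Longrightarrow>
   ennreal (Pjoint Pb Pt z zh) * (\<integral>\<^sup>+e. f zh e \<partial>\<pi>) \<le> Ez N M Pb Pt \<pi> z f"
  unfolding Ez_def by (rule member_le_sum) (auto simp: finite_Z)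

lemma int_fin_of_Ez: "Ez N M Pb Pt \<pi> z f < \<infinity> \<Longrightarrow> z \<in> ZZ \<Longrightarrow> zh \<in> ZZ \<Longrightarrow>
   0 < Pjoint Pb Pt z zh \<Longrightarrow> (\<integral>\<^sup>+e. f zh e \<partial>\<pi>) < \<infinity>"
proof -
  assume a: "Ez N M Pb Pt \<pi> z f < \<infinity>" "z \<in> ZZ" "zh \<in> ZZ" "0 < Pjoint Pb Pt z zh"
  have "ennreal (Pjoint Pb Pt z zh) * (\<integral>\<^sup>+e. f zh e \<partial>\<pi>) < \<infinity>"
    using term_le_Ez[OF a(2,3)] a(1) by (rule le_less_trans)
  then show ?thesis using a(4) by (auto simp: ennreal_mult_less_top)
qed

lemma uY_fin: "z \<in> ZZ \<Longrightarrow> zh \<in> ZZ \<Longrightarrow> 0 < Pjoint Pb Pt z zh \<Longrightarrow>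
  (\<integral>\<^sup>+e. ennreal (\<beta> z zh e * R z zh e) * uprimeE \<gamma> (Y z zh e) zh \<partial>\<pi>) < \<infinity>"
  using int_fin_of_Ez[of z "\<lambda>zh e. ennreal (\<beta> z zh e * R z zh e) * uprimeE \<gamma> (Y z zh e) zh" zh]
    A2a2 by auto

lemma bR_fin: "z \<in> ZZ \<Longrightarrow> zh \<in> ZZ \<Longrightarrow> 0 < Pjoint Pb Pt z zh \<Longrightarrow>
  (\<integral>\<^sup>+e. ennreal (\<beta> z zh e * R z zh e) \<partial>\<pi>) < \<infinity>"
proof -
  assume a: "z \<in> ZZ" "zh \<in> ZZ" "0 < Pjoint Pb Pt z zh"
  have "Kentry Pb Pt \<pi> \<beta> R z zh < \<infinity>" using K_fin a by blast
  then show ?thesis using a(3) by (auto simp: Kentry_def ennreal_mult_less_top)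
qed

lemma null: "z \<in> ZZ \<Longrightarrow> zh \<in> ZZ \<Longrightarrow> 0 < Pjoint Pb Pt z zh \<Longrightarrow>
   AE e in \<pi>. 0 < \<beta> z zh e * R z zh e \<longrightarrow> 0 < Y z zh e"
proof -
  assume a: "z \<in> ZZ" "zh \<in> ZZ" "0 < Pjoint Pb Pt z zh"
  have "AE e in \<pi>. ennreal (\<beta> z zh e * R z zh e) * uprimeE \<gamma> (Y z zh e) zh \<noteq> \<infinity>"
    by (rule nn_integral_PInf_AE[OF meas_uY[OF a(1,2)]]) (use uY_fin[OF a] in auto)
  then show ?thesis
  proof eventually_elim
    case (elim e)
    then show ?case by (cases "0 < Y z zh e") (auto simp: uprimeE_def ennreal_mult_eq_top_iff)
  qed
qed

lemma bound: "zh \<in> ZZ \<Longrightarrow> \<xi> \<le> w \<Longrightarrow> G z w \<xi> zh e \<le> Hd z zh e"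
proof -
  assume zh: "zh \<in> ZZ" and xw: "\<xi> \<le> w"
  have nn: "0 \<le> \<beta> z zh e" "0 \<le> R z zh e" "0 \<le> Y z zh e" using nn_all by auto
  show ?thesis
  proof (cases "0 < \<beta> z zh e * R z zh e")
    case False
    then have "\<beta> z zh e * R z zh e = 0" using nn by (simp add: less_le)
    then have h0: "ennreal (\<beta> z zh e * R z zh e) = 0" by auto
    show ?thesis unfolding G_def h0 by simp
  next
    case bR: True
    show ?thesis
    proof (cases "0 < Y z zh e")
      case False
      have ne: "ennreal (\<beta> z zh e * R z zh e) \<noteq> 0" using bR by (metis ennreal_eq_0_iff not_le)
      have "Hd z zh e = \<top>" unfolding Hd_def uprimeE_def using False ennreal_top_mult_left[OF ne] by simp
      then show ?thesis by simp
    next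
      case Y: True
      define X where "X = R z zh e * (w - \<xi>) + Y z zh e"
      have XY: "Y z zh e \<le> X" unfolding X_def using nn xw by simp
      have X: "0 < X" using XY Y by simp
      have cX: "0 < c X zh" using c_props[OF X zh] by simp
      have "uprime \<gamma> (c X zh) zh \<le> uprime \<gamma> (Y z zh e) zh + Bc"
        using Bc(2)[OF X zh] uprime_anti[OF zh Y XY] by linarith
      then have "uprimeE \<gamma> (c X zh) zh \<le> uprimeE \<gamma> (Y z zh e) zh + ennreal Bc"
        using cX Y Bc(1) uprime_nonneg[of "Y z zh e" zh]
        by (simp add: uprimeE_def ennreal_plus[symmetric] del: ennreal_plus)
      then have "ennreal (\<beta> z zh e * R z zh e) * uprimeE \<gamma> (c X zh) zh \<le>
            ennreal (\<beta> z zh e * R z zh e) * (uprimeE \<gamma> (Y z zh e) zh + ennreal Bc)"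
        by (rule mult_left_mono) simp
      then show ?thesis unfolding G_def Hd_def X_def by (simp add: distrib_left)
    qed
  qed
qed

lemma meas_Hd: "z \<in> ZZ \<Longrightarrow> zh \<in> ZZ \<Longrightarrow> Hd z zh \<in> borel_measurable \<pi>"
proof -
  assume z: "z \<in> ZZ" and zh: "zh \<in> ZZ"
  note mz[measurable] = measZ[OF z zh, THEN conjunct1] measZ[OF z zh, THEN conjunct2, THEN conjunct1]
     measZ[OF z zh, THEN conjunct2, THEN conjunct2]
  note [measurable] = meas_uY[OF z zh]
  show ?thesis unfolding Hd_def by measurable
qed

lemma Hd_fin: "z \<in> ZZ \<Longrightarrow> zh \<in> ZZ \<Longrightarrow> 0 < Pjoint Pb Pt z zh \<Longrightarrow> (\<integral>\<^sup>+e. Hd z zh e \<partial>\<pi>) < \<infinity>"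
proof -
  assume a: "z \<in> ZZ" "zh \<in> ZZ" "0 < Pjoint Pb Pt z zh"
  note mz[measurable] = measZ[OF a(1,2), THEN conjunct1] measZ[OF a(1,2), THEN conjunct2, THEN conjunct1]
     measZ[OF a(1,2), THEN conjunct2, THEN conjunct2]
  note [measurable] = meas_uY[OF a(1,2)]
  have "(\<integral>\<^sup>+e. Hd z zh e \<partial>\<pi>) = (\<integral>\<^sup>+e. ennreal (\<beta> z zh e * R z zh e) * uprimeE \<gamma> (Y z zh e) zh \<partial>\<pi>)
      + (\<integral>\<^sup>+e. ennreal (\<beta> z zh e * R z zh e) \<partial>\<pi>) * ennreal Bc"
    unfolding Hd_def by (subst nn_integral_add) (auto simp: nn_integral_multc)
  then show ?thesis using uY_fin[OF a] bR_fin[OF a] by (simp add: ennreal_mult_less_top)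
qed

lemma HdT_fin: "z \<in> ZZ \<Longrightarrow> zh \<in> ZZ \<Longrightarrow> ennreal (Pjoint Pb Pt z zh) * (\<integral>\<^sup>+e. Hd z zh e \<partial>\<pi>) < \<infinity>"
  using Hd_fin[of z zh] by (cases "0 < Pjoint Pb Pt z zh") (auto simp: ennreal_mult_less_top ennreal_neg)

definition Fb where "Fb z = (\<Sum>zh\<in>ZZ. ennreal (Pjoint Pb Pt z zh) * (\<integral>\<^sup>+e. Hd z zh e \<partial>\<pi>))"

lemma Fb_fin: "z \<in> ZZ \<Longrightarrow> Fb z < \<infinity>"
  unfolding Fb_def using HdT_fin finite_Z by (simp add: top.extremum_strict)

lemma F_le_Fb: "\<xi> \<le> w \<Longrightarrow> F z w \<xi> \<le> Fb z"
  unfolding F_def Ez_def Fb_def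
  by (intro sum_mono mult_left_mono nn_integral_mono) (auto intro: bound)

lemma G_mono_pt: "zh \<in> ZZ \<Longrightarrow> \<xi>1 \<le> \<xi>2 \<Longrightarrow> \<xi>2 \<le> w \<Longrightarrow>
   (0 < \<beta> z zh e * R z zh e \<longrightarrow> 0 < Y z zh e) \<Longrightarrow> G z w \<xi>1 zh e \<le> G z w \<xi>2 zh e"
proof -
  assume zh: "zh \<in> ZZ" and x12: "\<xi>1 \<le> \<xi>2" and xw: "\<xi>2 \<le> w" and imp: "0 < \<beta> z zh e * R z zh e \<longrightarrow> 0 < Y z zh e"
  have nn: "0 \<le> \<beta> z zh e" "0 \<le> R z zh e" "0 \<le> Y z zh e" using nn_all by auto
  show ?thesis
  proof (cases "0 < \<beta> z zh e * R z zh e")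
    case False
    then have "\<beta> z zh e * R z zh e = 0" using nn by (simp add: less_le)
    then have h0: "ennreal (\<beta> z zh e * R z zh e) = 0" by auto
    show ?thesis unfolding G_def h0 by simp
  next
    case bR: True
    then have Y: "0 < Y z zh e" using imp by simp
    define X1 where "X1 = R z zh e * (w - \<xi>1) + Y z zh e"
    define X2 where "X2 = R z zh e * (w - \<xi>2) + Y z zh e"
    have X2: "0 < X2" unfolding X2_def using nn xw Y by (simp add: add_nonneg_pos)
    have X21: "X2 \<le> X1" unfolding X1_def X2_def using nn x12 by (simp add: mult_left_mono)
    have c21: "c X2 zh \<le> c X1 zh" by (rule c_mono[OF X2 X21 zh])
    have c2: "0 < c X2 zh" using c_props[OF X2 zh] by simp
    have c1: "0 < c X1 zh" using c2 c21 by simp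
    have "uprime \<gamma> (c X1 zh) zh \<le> uprime \<gamma> (c X2 zh) zh" by (rule uprime_anti[OF zh c2 c21])
    then have "uprimeE \<gamma> (c X1 zh) zh \<le> uprimeE \<gamma> (c X2 zh) zh"
      using c1 c2 by (simp add: uprimeE_def uprime_nonneg)
    then have "ennreal (\<beta> z zh e * R z zh e) * uprimeE \<gamma> (c X1 zh) zh \<le>
            ennreal (\<beta> z zh e * R z zh e) * uprimeE \<gamma> (c X2 zh) zh"
      by (rule mult_left_mono) simp
    then show ?thesis unfolding G_def X1_def X2_def .
  qed
qed

lemma F_mono: "z \<in> ZZ \<Longrightarrow> \<xi>1 \<le> \<xi>2 \<Longrightarrow> \<xi>2 \<le> w \<Longrightarrow> F z w \<xi>1 \<le> F z w \<xi>2"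
  unfolding F_def Ez_def
proof (intro sum_mono)
  fix zh assume z: "z \<in> ZZ" and x12: "\<xi>1 \<le> \<xi>2" and xw: "\<xi>2 \<le> w" and zh: "zh \<in> ZZ"
  show "ennreal (Pjoint Pb Pt z zh) * integral\<^sup>N \<pi> (G z w \<xi>1 zh) \<le>
        ennreal (Pjoint Pb Pt z zh) * integral\<^sup>N \<pi> (G z w \<xi>2 zh)"
  proof (cases "0 < Pjoint Pb Pt z zh")
    case True
    have "AE e in \<pi>. G z w \<xi>1 zh e \<le> G z w \<xi>2 zh e"
      using null[OF z zh True] by eventually_elim (rule G_mono_pt[OF zh x12 xw])
    then show ?thesis by (intro mult_left_mono nn_integral_mono_AE) auto
  next
    case False then show ?thesis by (simp add: ennreal_neg)
  qed
qed

end


context RA begin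

lemma G_eq_pos: "zh \<in> ZZ \<Longrightarrow> \<xi> \<le> w \<Longrightarrow> 0 < Y z zh e \<Longrightarrow>
  G z w \<xi> zh e = ennreal (\<beta> z zh e * R z zh e * (c (R z zh e * (w - \<xi>) + Y z zh e) zh) powr (- \<gamma> (fst zh)))"
proof -
  assume zh: "zh \<in> ZZ" and xw: "\<xi> \<le> w" and Y: "0 < Y z zh e"
  have X: "0 < R z zh e * (w - \<xi>) + Y z zh e"
    using nn_all[of z zh e] xw Y by (simp add: add_nonneg_pos)
  have cX: "0 < c (R z zh e * (w - \<xi>) + Y z zh e) zh" using c_props[OF X zh] by simp
  have bR: "0 \<le> \<beta> z zh e * R z zh e" using nn_all[of z zh e] by simp
  have "ennreal (\<beta> z zh e * R z zh e * (c (R z zh e * (w - \<xi>) + Y z zh e) zh) powr (- \<gamma> (fst zh)))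
     = ennreal (\<beta> z zh e * R z zh e) * ennreal ((c (R z zh e * (w - \<xi>) + Y z zh e) zh) powr (- \<gamma> (fst zh)))"
    by (rule ennreal_mult'[OF bR])
  then show ?thesis unfolding G_def uprimeE_def uprime_def using cX by simp
qed

lemma G_lim_pt: "zh \<in> ZZ \<Longrightarrow> (\<forall>n. s n \<le> w) \<Longrightarrow> s \<longlonglongrightarrow> \<xi>0 \<Longrightarrow> \<xi>0 \<le> w \<Longrightarrow>
   (0 < \<beta> z zh e * R z zh e \<longrightarrow> 0 < Y z zh e) \<Longrightarrow> (\<lambda>n. G z w (s n) zh e) \<longlonglongrightarrow> G z w \<xi>0 zh e"
proof -
  assume zh: "zh \<in> ZZ" and sw: "\<forall>n. s n \<le> w" and lim: "s \<longlonglongrightarrow> \<xi>0" and x0: "\<xi>0 \<le> w"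
    and imp: "0 < \<beta> z zh e * R z zh e \<longrightarrow> 0 < Y z zh e"
  have nn: "0 \<le> \<beta> z zh e" "0 \<le> R z zh e" "0 \<le> Y z zh e" using nn_all by auto
  show ?thesis
  proof (cases "0 < \<beta> z zh e * R z zh e")
    case False
    then have "\<beta> z zh e * R z zh e = 0" using nn by (simp add: less_le)
    then have h0: "ennreal (\<beta> z zh e * R z zh e) = 0" by auto
    show ?thesis unfolding G_def h0 by simp
  next
    case bR: True
    then have Y: "0 < Y z zh e" using imp by simp
    have Xl: "(\<lambda>n. R z zh e * (w - s n) + Y z zh e) \<longlonglongrightarrow> R z zh e * (w - \<xi>0) + Y z zh e"
      by (intro tendsto_intros lim)
    have X0: "0 < R z zh e * (w - \<xi>0) + Y z zh e" using nn x0 Y by (simp add: add_nonneg_pos)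
    have ev: "\<forall>\<^sub>F n in sequentially. R z zh e * (w - s n) + Y z zh e \<in> {0<..}"
      using nn sw Y by (intro always_eventually) (auto simp: add_nonneg_pos)
    have cl: "(\<lambda>n. c (R z zh e * (w - s n) + Y z zh e) zh) \<longlonglongrightarrow> c (R z zh e * (w - \<xi>0) + Y z zh e) zh"
      by (rule continuous_on_tendsto_compose[OF c_cont[OF zh] Xl]) (use X0 ev in auto)
    have cpos: "0 < c (R z zh e * (w - \<xi>0) + Y z zh e) zh" using c_props[OF X0 zh] by simp
    have pl: "(\<lambda>n. \<beta> z zh e * R z zh e * (c (R z zh e * (w - s n) + Y z zh e) zh) powr (- \<gamma> (fst zh)))
       \<longlonglongrightarrow> \<beta> z zh e * R z zh e * (c (R z zh e * (w - \<xi>0) + Y z zh e) zh) powr (- \<gamma> (fst zh))"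
      by (intro tendsto_mult tendsto_const tendsto_powr cl) (use cpos in auto)
    have eqn: "(\<lambda>n. G z w (s n) zh e) = (\<lambda>n. ennreal (\<beta> z zh e * R z zh e * (c (R z zh e * (w - s n) + Y z zh e) zh) powr (- \<gamma> (fst zh))))"
      using G_eq_pos[OF zh _ Y] sw by auto
    show ?thesis unfolding eqn G_eq_pos[OF zh x0 Y] by (rule tendsto_ennrealI[OF pl])
  qed
qed

lemma T_lim: "z \<in> ZZ \<Longrightarrow> zh \<in> ZZ \<Longrightarrow> (\<forall>n. s n \<le> w) \<Longrightarrow> s \<longlonglongrightarrow> \<xi>0 \<Longrightarrow> \<xi>0 \<le> w \<Longrightarrow>
   (\<lambda>n. ennreal (Pjoint Pb Pt z zh) * (\<integral>\<^sup>+e. G z w (s n) zh e \<partial>\<pi>))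
     \<longlonglongrightarrow> ennreal (Pjoint Pb Pt z zh) * (\<integral>\<^sup>+e. G z w \<xi>0 zh e \<partial>\<pi>)"
proof (cases "0 < Pjoint Pb Pt z zh")
  case True
  assume z: "z \<in> ZZ" and zh: "zh \<in> ZZ" and sw: "\<forall>n. s n \<le> w" and lim: "s \<longlonglongrightarrow> \<xi>0" and x0: "\<xi>0 \<le> w"
  have "(\<lambda>n. (\<integral>\<^sup>+e. G z w (s n) zh e \<partial>\<pi>)) \<longlonglongrightarrow> (\<integral>\<^sup>+e. G z w \<xi>0 zh e \<partial>\<pi>)"
  proof (rule nn_integral_dominated_convergence[where w="Hd z zh" and u="\<lambda>n. G z w (s n) zh" and u'="G z w \<xi>0 zh"])
    show "\<And>i. G z w (s i) zh \<in> borel_measurable \<pi>" using meas_G[OF z zh] sw by auto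
    show "G z w \<xi>0 zh \<in> borel_measurable \<pi>" using meas_G[OF z zh x0] .
    show "Hd z zh \<in> borel_measurable \<pi>" using meas_Hd[OF z zh] .
    show "\<And>j. AE x in \<pi>. G z w (s j) zh x \<le> Hd z zh x" using bound[OF zh] sw by auto
    show "(\<integral>\<^sup>+x. Hd z zh x \<partial>\<pi>) < \<infinity>" using Hd_fin[OF z zh True] .
    show "AE x in \<pi>. (\<lambda>i. G z w (s i) zh x) \<longlonglongrightarrow> G z w \<xi>0 zh x"
      using null[OF z zh True] by eventually_elim (rule G_lim_pt[OF zh sw lim x0])
  qed
  then show ?thesis using True by (intro tendsto_mult_ennreal tendsto_const) auto
next
  case False
  then show ?thesis by (simp add: ennreal_neg)
qed

lemma F_lim: "z \<in> ZZ \<Longrightarrow> (\<forall>n. s n \<le> w) \<Longrightarrow> s \<longlonglongrightarrow> \<xi>0 \<Longrightarrow> \<xi>0 \<le> w \<Longrightarrow>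
   (\<lambda>n. F z w (s n)) \<longlonglongrightarrow> F z w \<xi>0"
  unfolding F_def Ez_def by (intro tendsto_sum T_lim) auto

lemma F_fin: "z \<in> ZZ \<Longrightarrow> \<xi> \<le> w \<Longrightarrow> F z w \<xi> < \<infinity>"
  using F_le_Fb Fb_fin le_less_trans by blast

lemma exist: "z \<in> ZZ \<Longrightarrow> 0 < w \<Longrightarrow>
   \<exists>\<xi>. 0 < \<xi> \<and> \<xi> \<le> w \<and> uprimeE \<gamma> \<xi> z = max (F z w \<xi>) (uprimeE \<gamma> w z)"
proof -
  assume z: "z \<in> ZZ" and w: "0 < w"
  define g where "g = \<gamma> (fst z)"
  have g: "0 < g" using gammaZ[OF z] by (simp add: g_def)
  define Kb where "Kb = enn2real (Fb z)"
  have Kb0: "0 \<le> Kb" by (simp add: Kb_def)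
  have FK: "\<And>\<xi>. \<xi> \<le> w \<Longrightarrow> enn2real (F z w \<xi>) \<le> Kb"
    unfolding Kb_def by (rule enn2real_mono[OF F_le_Fb]) (use Fb_fin[OF z] in simp_all)
  define V where "V = Kb + w powr (-g) + 1"
  have wg0: "0 \<le> w powr (-g)" by simp
  have V: "0 < V" unfolding V_def using Kb0 wg0 by linarith
  define a where "a = min w (V powr (-1/g))"
  have a0: "0 < a" using w V by (simp add: a_def)
  have aw: "a \<le> w" by (simp add: a_def)
  have "(V powr (-1/g)) powr (-g) \<le> a powr (-g)"
    by (rule powr_mono2') (use g a0 in \<open>auto simp: a_def\<close>)
  moreover have "(V powr (-1/g)) powr (-g) = V"
  proof -
    have "(-1/g) * (-g) = 1" using g by (simp add: field_simps)
    then show ?thesis using V by (simp add: powr_powr)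
  qed
  ultimately have aV: "V \<le> a powr (-g)" by simp
  define \<psi> where "\<psi> = (\<lambda>\<xi>. \<xi> powr (-g) - max (enn2real (F z w \<xi>)) (w powr (-g)))"
  have \<psi>a: "0 \<le> \<psi> a"
  proof -
    have "max (enn2real (F z w a)) (w powr (-g)) \<le> Kb + w powr (-g)"
    proof (rule max.boundedI)
      show "enn2real (F z w a) \<le> Kb + w powr (-g)" using FK[OF aw] wg0 by linarith
      show "w powr (-g) \<le> Kb + w powr (-g)" using Kb0 by linarith
    qed
    then show ?thesis using aV unfolding \<psi>_def V_def by simp
  qed
  have \<psi>w: "\<psi> w \<le> 0" by (simp add: \<psi>_def)
  have cont: "continuous_on {a..w} \<psi>"
  proof (rule continuous_on_sequentiallyI)
    fix u \<xi>0 assume u: "\<forall>n. u n \<in> {a..w}" and x0: "\<xi>0 \<in> {a..w}" and lim: "u \<longlonglongrightarrow> \<xi>0"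
    have Fl: "(\<lambda>n. F z w (u n)) \<longlonglongrightarrow> F z w \<xi>0"
      by (rule F_lim[OF z]) (use u x0 lim in auto)
    have eq: "ennreal (enn2real (F z w \<xi>0)) = F z w \<xi>0" using F_fin[OF z] x0 by simp
    have Fl': "(\<lambda>n. F z w (u n)) \<longlonglongrightarrow> ennreal (enn2real (F z w \<xi>0))" using Fl eq by simp
    have l1: "(\<lambda>n. enn2real (F z w (u n))) \<longlonglongrightarrow> enn2real (F z w \<xi>0)"
      by (rule tendsto_enn2real[OF Fl']) simp
    have l2: "(\<lambda>n. (u n) powr (-g)) \<longlonglongrightarrow> \<xi>0 powr (-g)"
      by (rule tendsto_powr[OF lim tendsto_const]) (use x0 a0 in auto)
    show "(\<lambda>n. \<psi> (u n)) \<longlonglongrightarrow> \<psi> \<xi>0"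
      unfolding \<psi>_def by (intro tendsto_diff tendsto_max tendsto_const l1 l2)
  qed
  obtain \<xi> where x: "a \<le> \<xi>" "\<xi> \<le> w" "\<psi> \<xi> = 0"
    using IVT2'[of \<psi> w 0 a, OF \<psi>w \<psi>a aw cont] by auto
  have x0: "0 < \<xi>" using x a0 by simp
  have eq1: "\<xi> powr (-g) = max (enn2real (F z w \<xi>)) (w powr (-g))" using x by (simp add: \<psi>_def)
  have "uprimeE \<gamma> \<xi> z = ennreal (\<xi> powr (-g))" using x0 by (simp add: uprimeE_def uprime_def g_def)
  also have "\<dots> = max (ennreal (enn2real (F z w \<xi>))) (ennreal (w powr (-g)))"
    unfolding eq1 by (rule ennreal_max_eq)
  also have "\<dots> = max (F z w \<xi>) (uprimeE \<gamma> w z)"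
    using F_fin[OF z x(2)] w by (simp add: uprimeE_def uprime_def g_def)
  finally show ?thesis using x0 x(2) by blast
qed

lemma uniq_aux: "z \<in> ZZ \<Longrightarrow>
   0 < a \<and> a \<le> w \<and> uprimeE \<gamma> a z = max (F z w a) (uprimeE \<gamma> w z) \<Longrightarrow>
   0 < b \<and> b \<le> w \<and> uprimeE \<gamma> b z = max (F z w b) (uprimeE \<gamma> w z) \<Longrightarrow> a < b \<Longrightarrow> False"
proof -
  assume z: "z \<in> ZZ" and A: "0 < a \<and> a \<le> w \<and> uprimeE \<gamma> a z = max (F z w a) (uprimeE \<gamma> w z)"
    and B: "0 < b \<and> b \<le> w \<and> uprimeE \<gamma> b z = max (F z w b) (uprimeE \<gamma> w z)" and ab: "a < b"
  have ult: "uprime \<gamma> b z < uprime \<gamma> a z" using uprime_strict[OF z] A ab by blast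
  have ea: "uprimeE \<gamma> a z = ennreal (uprime \<gamma> a z)" using A by (simp add: uprimeE_def)
  have eb: "uprimeE \<gamma> b z = ennreal (uprime \<gamma> b z)" using B by (simp add: uprimeE_def)
  have lt: "uprimeE \<gamma> b z < uprimeE \<gamma> a z"
    unfolding ea eb using ult by (simp add: ennreal_less_iff uprime_nonneg)
  have "F z w a \<le> F z w b" using F_mono[OF z, of a b w] A B ab by simp
  then have mm: "max (F z w a) (uprimeE \<gamma> w z) \<le> max (F z w b) (uprimeE \<gamma> w z)"
    by (rule max.mono) simp
  have Aeq: "uprimeE \<gamma> a z = max (F z w a) (uprimeE \<gamma> w z)" using A by blast
  have Beq: "uprimeE \<gamma> b z = max (F z w b) (uprimeE \<gamma> w z)" using B by blast
  have "uprimeE \<gamma> a z \<le> uprimeE \<gamma> b z" unfolding Aeq Beq by (rule mm)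
  then show False using lt by simp
qed

lemma euler: "z \<in> ZZ \<Longrightarrow> 0 < w \<Longrightarrow> F z w (c w z) \<le> uprimeE \<gamma> (c w z) z \<and> 0 < c w z \<and> c w z \<le> w"
proof -
  assume z: "z \<in> ZZ" and w: "0 < w"
  define Pr where "Pr = (\<lambda>\<xi>. 0 < \<xi> \<and> \<xi> \<le> w \<and> uprimeE \<gamma> \<xi> z = max (F z w \<xi>) (uprimeE \<gamma> w z))"
  have ex: "\<exists>\<xi>. Pr \<xi>" using exist[OF z w] by (simp add: Pr_def)
  have un: "\<And>a b. Pr a \<Longrightarrow> Pr b \<Longrightarrow> a = b"
  proof -
    fix a b assume "Pr a" "Pr b"
    then show "a = b" unfolding Pr_def
    proof (cases a b rule: linorder_cases)
      case less then show ?thesis using uniq_aux[OF z] \<open>Pr a\<close> \<open>Pr b\<close> unfolding Pr_def by blast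
    next
      case greater then show ?thesis using uniq_aux[OF z] \<open>Pr a\<close> \<open>Pr b\<close> unfolding Pr_def by blast
    qed
  qed
  have ex1: "\<exists>!\<xi>. Pr \<xi>" using ex un by blast
  have "Pr (THE \<xi>. Pr \<xi>)" by (rule theI'[OF ex1])
  moreover have "c w z = (THE \<xi>. Pr \<xi>)"
  proof -
    have "Top N M Pb Pt \<pi> \<gamma> \<beta> R Y c w z = c w z" using cstar_fix z w by blast
    then show ?thesis unfolding Top_eq Pr_def by simp
  qed
  ultimately have "Pr (c w z)" by simp
  then show ?thesis unfolding Pr_def by simp
qed

end


context RA begin

definition Sn where "Sn z zh n = {e \<in> space \<pi>. 1 \<le> real (Suc n) * (\<beta> z zh e * R z zh e) \<and>
    R z zh e \<le> real n \<and> Y z zh e \<le> real n}"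

lemma Sn_sets: "z \<in> ZZ \<Longrightarrow> zh \<in> ZZ \<Longrightarrow> Sn z zh n \<in> sets \<pi>"
proof -
  assume z: "z \<in> ZZ" and zh: "zh \<in> ZZ"
  note mz[measurable] = measZ[OF z zh, THEN conjunct1] measZ[OF z zh, THEN conjunct2, THEN conjunct1]
     measZ[OF z zh, THEN conjunct2, THEN conjunct2]
  show ?thesis unfolding Sn_def by measurable
qed

lemma pos_set: "z \<in> ZZ \<Longrightarrow> zh \<in> ZZ \<Longrightarrow> \<exists>n. 0 < emeasure \<pi> (Sn z zh n)"
proof (rule ccontr)
  assume z: "z \<in> ZZ" and zh: "zh \<in> ZZ" and nex: "\<not> (\<exists>n. 0 < emeasure \<pi> (Sn z zh n))"
  note mz[measurable] = measZ[OF z zh, THEN conjunct1] measZ[OF z zh, THEN conjunct2, THEN conjunct1]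
     measZ[OF z zh, THEN conjunct2, THEN conjunct2]
  have zero: "\<And>n. emeasure \<pi> (Sn z zh n) = 0" using nex by (simp add: not_gr_zero)
  have rs: "range (Sn z zh) \<subseteq> sets \<pi>" using Sn_sets[OF z zh] by auto
  have U0: "emeasure \<pi> (\<Union>n. Sn z zh n) = 0" by (rule emeasure_UN_eq_0[OF zero rs])
  have sub: "{e \<in> space \<pi>. \<beta> z zh e * R z zh e > 0} \<subseteq> (\<Union>n. Sn z zh n)"
  proof
    fix e assume e: "e \<in> {e \<in> space \<pi>. \<beta> z zh e * R z zh e > 0}"
    then have bR: "0 < \<beta> z zh e * R z zh e" by simp
    obtain n1 :: nat where n1: "1 < real n1 * (\<beta> z zh e * R z zh e)" using ex_less_of_nat_mult[OF bR] by auto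
    obtain n2 :: nat where n2: "max (R z zh e) (Y z zh e) \<le> real n2" using real_arch_simple by blast
    have "1 \<le> real (Suc (n1 + n2)) * (\<beta> z zh e * R z zh e)"
    proof -
      have "real n1 * (\<beta> z zh e * R z zh e) \<le> real (Suc (n1 + n2)) * (\<beta> z zh e * R z zh e)"
        using bR by (intro mult_right_mono) auto
      then show ?thesis using n1 by simp
    qed
    moreover have "R z zh e \<le> real (n1 + n2)" "Y z zh e \<le> real (n1 + n2)" using n2 by auto
    ultimately have "e \<in> Sn z zh (n1 + n2)" using e by (simp add: Sn_def)
    then show "e \<in> (\<Union>n. Sn z zh n)" by blast
  qed
  have Us: "(\<Union>n. Sn z zh n) \<in> sets \<pi>" by (rule sets.countable_UN[OF rs])
  have "emeasure \<pi> {e \<in> space \<pi>. \<beta> z zh e * R z zh e > 0} \<le> emeasure \<pi> (\<Union>n. Sn z zh n)"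
    by (rule emeasure_mono[OF sub Us])
  then have "emeasure \<pi> {e \<in> space \<pi>. \<beta> z zh e * R z zh e > 0} = 0" using U0 by simp
  then have "measure \<pi> {e \<in> space \<pi>. \<beta> z zh e * R z zh e > 0} = 0" by (simp add: measure_def)
  then show False using pos_prob z zh by fastforce
qed

lemma lower: "z \<in> ZZ \<Longrightarrow> zh \<in> ZZ \<Longrightarrow> 0 < Pjoint Pb Pt z zh \<Longrightarrow>
   \<exists>K>0. \<exists>A>0. \<forall>w>0. \<forall>\<xi>. 0 < \<xi> \<longrightarrow> \<xi> \<le> w \<longrightarrow>
      ennreal (K * (A * (w + 1)) powr (- \<gamma> (fst zh))) \<le> F z w \<xi>"
proof -
  assume z: "z \<in> ZZ" and zh: "zh \<in> ZZ" and P: "0 < Pjoint Pb Pt z zh"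
  interpret PS: prob_space \<pi> by (rule pi)
  obtain n where pos: "0 < emeasure \<pi> (Sn z zh n)" using pos_set[OF z zh] by blast
  define m where "m = measure \<pi> (Sn z zh n)"
  have em: "emeasure \<pi> (Sn z zh n) = ennreal m" unfolding m_def by (rule PS.emeasure_eq_measure)
  have m: "0 < m" using pos em by (simp add: m_def)
  define \<delta> where "\<delta> = 1 / real (Suc n)"
  define A where "A = real (Suc n)"
  define g where "g = \<gamma> (fst zh)"
  have g: "0 < g" using gammaZ[OF zh] by (simp add: g_def)
  have \<delta>: "0 < \<delta>" by (simp add: \<delta>_def)
  have A: "0 < A" by (simp add: A_def)
  define K where "K = Pjoint Pb Pt z zh * \<delta> * m"
  have K: "0 < K" using P \<delta> m by (simp add: K_def)
  have "\<forall>w>0. \<forall>\<xi>. 0 < \<xi> \<longrightarrow> \<xi> \<le> w \<longrightarrow> ennreal (K * (A * (w + 1)) powr (- g)) \<le> F z w \<xi>"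
  proof (intro allI impI)
    fix w \<xi> :: real assume w: "0 < w" and x0: "0 < \<xi>" and xw: "\<xi> \<le> w"
    define q where "q = \<delta> * (A * (w + 1)) powr (- g)"
    have q0: "0 \<le> q" using \<delta> by (simp add: q_def)
    have pt: "AE e in \<pi>. ennreal q * indicator (Sn z zh n) e \<le> G z w \<xi> zh e"
      using null[OF z zh P]
    proof eventually_elim
      case (elim e)
      show ?case
      proof (cases "e \<in> Sn z zh n")
        case False then show ?thesis by simp
      next
        case True
        have nn: "0 \<le> \<beta> z zh e" "0 \<le> R z zh e" "0 \<le> Y z zh e" using nn_all by auto
        have s1: "1 \<le> real (Suc n) * (\<beta> z zh e * R z zh e)" and sR: "R z zh e \<le> real n"
          and sY: "Y z zh e \<le> real n" using True by (auto simp: Sn_def)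
        have dl: "\<delta> \<le> \<beta> z zh e * R z zh e" using s1 by (simp add: \<delta>_def field_simps)
        have bR: "0 < \<beta> z zh e * R z zh e" using dl \<delta> by simp
        have Y: "0 < Y z zh e" using elim bR by simp
        define X where "X = R z zh e * (w - \<xi>) + Y z zh e"
        have X: "0 < X" using nn xw Y by (simp add: X_def add_nonneg_pos)
        have "R z zh e * (w - \<xi>) \<le> real n * w"
          using nn sR xw x0 w by (intro mult_mono) auto
        then have XA1: "X \<le> real n * w + real n" using sY unfolding X_def by linarith
        have "real n * w + real n \<le> A * (w + 1)" unfolding A_def using w by (simp add: algebra_simps)
        then have XA: "X \<le> A * (w + 1)" using XA1 by linarith
        have cX: "0 < c X zh" "c X zh \<le> X" using c_props[OF X zh] by auto
        have "(A * (w + 1)) powr (- g) \<le> X powr (- g)" by (rule powr_mono2') (use g X XA in auto)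
        also have "\<dots> \<le> (c X zh) powr (- g)" by (rule powr_mono2') (use g cX in auto)
        finally have pw: "(A * (w + 1)) powr (- g) \<le> (c X zh) powr (- g)" .
        have "q \<le> \<beta> z zh e * R z zh e * (c X zh) powr (- g)"
          unfolding q_def using dl pw \<delta> by (intro mult_mono) auto
        then have "ennreal q \<le> G z w \<xi> zh e"
          using G_eq_pos[OF zh xw Y] by (simp add: X_def g_def ennreal_leI)
        then show ?thesis using True by simp
      qed
    qed
    have "(\<integral>\<^sup>+e. ennreal q * indicator (Sn z zh n) e \<partial>\<pi>) \<le> (\<integral>\<^sup>+e. G z w \<xi> zh e \<partial>\<pi>)"
      by (rule nn_integral_mono_AE[OF pt])
    then have "ennreal q * ennreal m \<le> (\<integral>\<^sup>+e. G z w \<xi> zh e \<partial>\<pi>)"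
      using nn_integral_cmult_indicator[OF Sn_sets[OF z zh], of "ennreal q" n] em by simp
    then have "ennreal (Pjoint Pb Pt z zh) * (ennreal q * ennreal m) \<le>
        ennreal (Pjoint Pb Pt z zh) * (\<integral>\<^sup>+e. G z w \<xi> zh e \<partial>\<pi>)"
      by (rule mult_left_mono) simp
    also have "\<dots> \<le> F z w \<xi>" unfolding F_def by (rule term_le_Ez[OF z zh])
    also have "ennreal (Pjoint Pb Pt z zh) * (ennreal q * ennreal m) = ennreal (K * (A * (w + 1)) powr (- g))"
    proof -
      have e1: "ennreal q * ennreal m = ennreal (q * m)" using q0 m by (simp add: ennreal_mult)
      have e2: "ennreal (Pjoint Pb Pt z zh) * ennreal (q * m) = ennreal (Pjoint Pb Pt z zh * (q * m))"
        by (rule ennreal_mult'[symmetric]) (use P in simp)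
      have e3: "Pjoint Pb Pt z zh * (q * m) = K * (A * (w + 1)) powr (- g)" by (simp add: K_def q_def mult_ac)
      show ?thesis unfolding e1 e2 e3 by (rule refl)
    qed
    finally show "ennreal (K * (A * (w + 1)) powr (- g)) \<le> F z w \<xi>" by simp
  qed
  then show ?thesis using K A unfolding g_def by blast
qed

lemma main_lemma: "i < N \<Longrightarrow> j < M \<Longrightarrow> 0 < L \<Longrightarrow> ((\<lambda>w. c w (i, j) / w) \<longlongrightarrow> L) at_top \<Longrightarrow>
   k < i \<Longrightarrow> Pb i k = 0"
proof (rule ccontr)
  assume i: "i < N" and j: "j < M" and L: "0 < L" and lim: "((\<lambda>w. c w (i, j) / w) \<longlongrightarrow> L) at_top"
    and ki: "k < i" and nz: "Pb i k \<noteq> 0"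
  have "0 \<le> Pb i k" using Pb ki i unfolding stochastic_def by auto
  then have Pbpos: "0 < Pb i k" using nz by simp
  obtain j' where j': "j' < M" "0 < Pt j j'"
  proof (rule ccontr)
    assume "\<not> thesis"
    then have "\<forall>b<M. Pt j b \<le> 0" using that by (meson not_le)
    then have "(\<Sum>b<M. Pt j b) \<le> 0" by (intro sum_nonpos) auto
    then show False using Pt j unfolding stochastic_def by simp
  qed
  define z where "z = (i, j)"
  define zh where "zh = (k, j')"
  have z: "z \<in> ZZ" using i j by (simp add: z_def Zset_def)
  have zh: "zh \<in> ZZ" using ki i j' by (simp add: zh_def Zset_def)
  have P: "0 < Pjoint Pb Pt z zh" using Pbpos j' by (simp add: Pjoint_def z_def zh_def)
  obtain K A where K: "0 < K" and A: "0 < A" and low: "\<forall>w>0. \<forall>\<xi>. 0 < \<xi> \<longrightarrow> \<xi> \<le> w \<longrightarrow>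
      ennreal (K * (A * (w + 1)) powr (- \<gamma> (fst zh))) \<le> F z w \<xi>"
    using lower[OF z zh P] by blast
  define gi where "gi = \<gamma> i"
  define gk where "gk = \<gamma> k"
  have gk: "0 < gk" using gamma_pos_all ki i by (simp add: gk_def)
  have gki: "gk < gi" using gamma_strict[OF ki i] by (simp add: gk_def gi_def)
  have ineq: "\<And>w. 0 < w \<Longrightarrow> K * (A * (w + 1)) powr (- gk) \<le> (c w z) powr (- gi)"
  proof -
    fix w :: real assume w: "0 < w"
    have eu: "F z w (c w z) \<le> uprimeE \<gamma> (c w z) z" "0 < c w z" "c w z \<le> w" using euler[OF z w] by auto
    have "ennreal (K * (A * (w + 1)) powr (- gk)) \<le> F z w (c w z)"
      using low w eu by (simp add: zh_def gk_def)
    also have "\<dots> \<le> ennreal ((c w z) powr (- gi))"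
      using eu by (simp add: uprimeE_def uprime_def z_def gi_def)
    finally show "K * (A * (w + 1)) powr (- gk) \<le> (c w z) powr (- gi)" by (simp add: ennreal_le_iff)
  qed
  have "eventually (\<lambda>w. L / 2 < c w (i, j) / w) at_top"
    using order_tendstoD(1)[OF lim, of "L / 2"] L by simp
  then obtain W where W: "\<And>w. w \<ge> W \<Longrightarrow> L / 2 < c w (i, j) / w"
    unfolding eventually_at_top_linorder by blast
  define d where "d = gi - gk"
  have d: "0 < d" using gki by (simp add: d_def)
  define C where "C = (L / 2) powr (- gi)"
  define K' where "K' = K * (2 * A) powr (- gk)"
  have K': "0 < K'" using K A by (simp add: K'_def)
  define w where "w = max (max W 1) ((C / K' + 1) powr (1 / d))"
  have w1: "1 \<le> w" by (simp add: w_def)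
  have w0: "0 < w" using w1 by simp
  have cw: "L / 2 * w < c w z" using W[of w] w0 by (simp add: w_def z_def field_simps)
  have C0: "0 \<le> C" by (simp add: C_def)
  have "(c w z) powr (- gi) \<le> (L / 2 * w) powr (- gi)"
    by (rule powr_mono2') (use gk gki L w0 cw in auto)
  also have "\<dots> = C * w powr (- gi)" unfolding C_def by (simp only: powr_mult)
  finally have up: "(c w z) powr (- gi) \<le> C * w powr (- gi)" .
  have p1: "0 < A * (w + 1)" using A w1 by simp
  have "A * 1 \<le> A * w" using A w1 by (intro mult_left_mono) auto
  then have p2: "A * (w + 1) \<le> 2 * A * w" by (simp add: algebra_simps)
  have "(2 * A * w) powr (- gk) \<le> (A * (w + 1)) powr (- gk)"
    by (rule powr_mono2') (use gk p1 p2 in auto)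
  moreover have "(2 * A * w) powr (- gk) = (2 * A) powr (- gk) * w powr (- gk)"
    by (simp only: powr_mult)
  ultimately have "K' * w powr (- gk) \<le> K * (A * (w + 1)) powr (- gk)"
    using K by (simp add: K'_def mult.assoc mult_left_mono)
  also have "\<dots> \<le> C * w powr (- gi)" using ineq[OF w0] up by simp
  finally have k1: "K' * w powr (- gk) \<le> C * w powr (- gi)" .
  have "w powr (- gk) = w powr d * w powr (- gi)" unfolding d_def by (simp add: powr_add[symmetric])
  then have "(K' * w powr d) * w powr (- gi) \<le> C * w powr (- gi)" using k1 by (simp add: mult.assoc)
  then have k2: "K' * w powr d \<le> C" using w0 by simp
  have "((C / K' + 1) powr (1 / d)) powr d \<le> w powr d"
    by (rule powr_mono2) (use d in \<open>auto simp: w_def\<close>)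
  moreover have "((C / K' + 1) powr (1 / d)) powr d = C / K' + 1"
  proof -
    have "(1 / d) * d = 1" using d by simp
    moreover have "0 < C / K' + 1" using C0 K' by (simp add: add_nonneg_pos)
    ultimately show ?thesis by (simp add: powr_powr)
  qed
  ultimately have "C / K' + 1 \<le> w powr d" by simp
  then have "K' * (C / K' + 1) \<le> K' * w powr d" using K' by (simp add: mult_left_mono)
  moreover have "K' * (C / K' + 1) = C + K'" using K' by (simp add: distrib_left)
  ultimately have "C + K' \<le> K' * w powr d" by simp
  then show False using k2 K' by simp
qed

end

theorem proposition3p1:
  fixes N M :: nat
    and Pb Pt :: "nat \<Rightarrow> nat \<Rightarrow> real"
    and \<gamma> :: "nat \<Rightarrow> real"
    and \<pi> :: "'e measure"
    and \<beta> R Y :: "nat \<times> nat \<Rightarrow> nat \<times> nat \<Rightarrow> 'e \<Rightarrow> real"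
    and cstar :: "real \<Rightarrow> nat \<times> nat \<Rightarrow> real"
  assumes NM: "N \<ge> 1" "M \<ge> 1"
    and Pb: "stochastic N Pb" and Pt: "stochastic M Pt"
    and gamma_pos: "0 < \<gamma> 0"
    and gamma_incr: "\<forall>i. i + 1 < N \<longrightarrow> \<gamma> i < \<gamma> (i + 1)"
    and pi: "prob_space \<pi>"
    and meas: "\<forall>z\<in>Zset N M. \<forall>zh\<in>Zset N M.
        \<beta> z zh \<in> borel_measurable \<pi> \<and> R z zh \<in> borel_measurable \<pi> \<and> Y z zh \<in> borel_measurable \<pi>"
    and nonneg: "\<forall>z zh e. 0 \<le> \<beta> z zh e \<and> 0 \<le> R z zh e \<and> 0 \<le> Y z zh e"
    and A2a1: "\<forall>z\<in>Zset N M. Ez N M Pb Pt \<pi> z (\<lambda>zh e. uprimeE \<gamma> (Y z zh e) zh) < \<infinity>"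
    and A2a2: "\<forall>z\<in>Zset N M. Ez N M Pb Pt \<pi> z
        (\<lambda>zh e. ennreal (\<beta> z zh e * R z zh e) * uprimeE \<gamma> (Y z zh e) zh) < \<infinity>"
    and K_fin: "\<forall>z\<in>Zset N M. \<forall>zh\<in>Zset N M. Kentry Pb Pt \<pi> \<beta> R z zh < \<infinity>"
    and A2b: "spectral_radius (Kmat N M Pb Pt \<pi> \<beta> R) < 1"
    and pos_prob: "\<forall>z\<in>Zset N M. \<forall>zh\<in>Zset N M.
        measure \<pi> {e \<in> space \<pi>. \<beta> z zh e * R z zh e > 0} > 0"
    and cstar_C: "cstar \<in> candC N M \<gamma>"
    and cstar_fix: "\<forall>w>0. \<forall>z\<in>Zset N M. Top N M Pb Pt \<pi> \<gamma> \<beta> R Y cstar w z = cstar w z"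
  shows "(\<forall>i<N. \<forall>j<M. (\<exists>L>0. ((\<lambda>w. cstar w (i, j) / w) \<longlongrightarrow> L) at_top)
            \<longrightarrow> (\<forall>k<i. Pb i k = 0))
       \<and> ((\<forall>i. 0 < i \<and> i < N \<longrightarrow> (\<exists>j<M. \<exists>L>0. ((\<lambda>w. cstar w (i, j) / w) \<longlongrightarrow> L) at_top))
            \<longrightarrow> (\<forall>i<N. \<forall>k<i. Pb i k = 0))"
proof -
  interpret RA N M Pb Pt \<gamma> \<pi> \<beta> R Y cstar
    by (rule RA.intro) (fact NM Pb Pt gamma_pos gamma_incr pi meas nonneg A2a2 K_fin pos_prob cstar_C cstar_fix)+
  have A: "\<forall>i<N. \<forall>j<M. (\<exists>L>0. ((\<lambda>w. cstar w (i, j) / w) \<longlongrightarrow> L) at_top)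
            \<longrightarrow> (\<forall>k<i. Pb i k = 0)"
  proof (intro allI impI)
    fix i j k assume i: "i < N" and j: "j < M"
      and ex: "\<exists>L>0. ((\<lambda>w. cstar w (i, j) / w) \<longlongrightarrow> L) at_top" and k: "k < i"
    from ex obtain L where L: "0 < L" and lim: "((\<lambda>w. cstar w (i, j) / w) \<longlongrightarrow> L) at_top" by blast
    show "Pb i k = 0" by (rule main_lemma[OF i j L lim k])
  qed
  have B: "(\<forall>i. 0 < i \<and> i < N \<longrightarrow> (\<exists>j<M. \<exists>L>0. ((\<lambda>w. cstar w (i, j) / w) \<longlongrightarrow> L) at_top))
            \<longrightarrow> (\<forall>i<N. \<forall>k<i. Pb i k = 0)"
  proof (intro impI allI)
    fix i k assume H: "\<forall>i. 0 < i \<and> i < N \<longrightarrow> (\<exists>j<M. \<exists>L>0. ((\<lambda>w. cstar w (i, j) / w) \<longlongrightarrow> L) at_top)"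
      and i: "i < N" and k: "k < i"
    have "0 < i \<and> i < N" using i k by simp
    then have "\<exists>j<M. \<exists>L>0. ((\<lambda>w. cstar w (i, j) / w) \<longlongrightarrow> L) at_top" using H by blast
    then obtain j L where j: "j < M" and L: "0 < L" and lim: "((\<lambda>w. cstar w (i, j) / w) \<longlongrightarrow> L) at_top"
      by blast
    show "Pb i k = 0" by (rule main_lemma[OF i j L lim k])
  qed
  show ?thesis using A B by (rule conjI)
qed

end
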